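(* Let $\eta$ and $\hat\eta$ be probability measures on $\mathbb{R}^d$ with positive, continuously differentiable Lebesgue densities (also denoted $\eta,\hat\eta$). Suppose $\hat\eta$ satisfies a Poincaré inequality with constant $C^{-1}$, $C>0$: for every (sufficiently regular) $\phi:\mathbb{R}^d\to\mathbb{R}$ with $\int\phi\,d\hat\eta=0$, $$\int\phi(\theta)^2\,\hat\eta(d\theta)\le C^{-1}\int\|\nabla\phi(\theta)\|_2^2\,\hat\eta(d\theta).$$ Then $$d_H(\eta,\hat\eta)\le(2C)^{-1/2}F_{2,\eta}(\eta,\hat\eta).$$
   Context: $d_H(\eta,\hat\eta)=\{\int|\eta(\theta)^{1/2}-\hat\eta(\theta)^{1/2}|^2\,d\theta\}^{1/2}$ is the Hellinger distance. $F_{2,\eta}(\eta,\hat\eta)=\left\{\int\|\nabla\log\eta(\theta)-\nabla\log\hat\eta(\theta)\|_2^2\,\eta(d\theta)\right\}^{1/2}$. *)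

theory Defs
  imports "HOL-Analysis.Analysis"
begin

definition grad :: "('a::euclidean_space \<Rightarrow> real) \<Rightarrow> 'a \<Rightarrow> 'a" where
  "grad f x = (\<Sum>b\<in>Basis. frechet_derivative f (at x) b *\<^sub>R b)"

definition C1_fun :: "('a::euclidean_space \<Rightarrow> real) \<Rightarrow> bool" where
  "C1_fun f \<longleftrightarrow> (\<forall>x. f differentiable (at x)) \<and> continuous_on UNIV (grad f)"

definition pos_C1_density :: "('a::euclidean_space \<Rightarrow> real) \<Rightarrow> bool" where
  "pos_C1_density p \<longleftrightarrow> (\<forall>x. p x > 0) \<and> C1_fun p \<and>
     integrable lborel p \<and> (\<integral>x. p x \<partial>lborel) = 1"

definition hellinger :: "('a::euclidean_space \<Rightarrow> real) \<Rightarrow> ('a \<Rightarrow> real) \<Rightarrow> real" where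
  "hellinger p q = sqrt (\<integral>x. (sqrt (p x) - sqrt (q x))\<^sup>2 \<partial>lborel)"

definition ennsqrt :: "ennreal \<Rightarrow> ennreal" where
  "ennsqrt t = (if t = \<infinity> then \<infinity> else ennreal (sqrt (enn2real t)))"

definition fisher2 :: "('a::euclidean_space \<Rightarrow> real) \<Rightarrow> ('a \<Rightarrow> real) \<Rightarrow> ennreal" where
  "fisher2 p q = ennsqrt (\<integral>\<^sup>+x. ennreal ((norm (grad (\<lambda>y. ln (p y)) x - grad (\<lambda>y. ln (q y)) x))\<^sup>2 * p x) \<partial>lborel)"

definition poincare :: "('a::euclidean_space \<Rightarrow> real) \<Rightarrow> real \<Rightarrow> bool" where
  "poincare q C \<longleftrightarrow> (\<forall>\<phi>. C1_fun \<phi> \<and>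
      integrable lborel (\<lambda>x. \<phi> x * q x) \<and>
      integrable lborel (\<lambda>x. (\<phi> x)\<^sup>2 * q x) \<and>
      integrable lborel (\<lambda>x. (norm (grad \<phi> x))\<^sup>2 * q x) \<and>
      (\<integral>x. \<phi> x * q x \<partial>lborel) = 0 \<longrightarrow>
      (\<integral>x. (\<phi> x)\<^sup>2 * q x \<partial>lborel) \<le> inverse C * (\<integral>x. (norm (grad \<phi> x))\<^sup>2 * q x \<partial>lborel))"

end

theory Submission
  imports Defs
begin

lemma grad_eq:
  fixes f :: "'a::euclidean_space \<Rightarrow> real"
  assumes "(f has_derivative (\<lambda>h. v \<bullet> h)) (at x)"
  shows "grad f x = v"
proof -
  have "frechet_derivative f (at x) = (\<lambda>h. v \<bullet> h)"
    using frechet_derivative_at[OF assms] by simp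
  then show ?thesis unfolding grad_def by (simp add: euclidean_representation)
qed

lemma grad_works:
  fixes f :: "'a::euclidean_space \<Rightarrow> real"
  assumes "f differentiable (at x)"
  shows "(f has_derivative (\<lambda>h. grad f x \<bullet> h)) (at x)"
proof -
  define D where "D = frechet_derivative f (at x)"
  have d: "(f has_derivative D) (at x)" using assms frechet_derivative_works D_def by blast
  then have lin: "linear D" using has_derivative_linear by blast
  have "D h = grad f x \<bullet> h" for h
  proof -
    have "D h = D (\<Sum>b\<in>Basis. (h \<bullet> b) *\<^sub>R b)" by (simp add: euclidean_representation)
    also have "\<dots> = (\<Sum>b\<in>Basis. (h \<bullet> b) * D b)"
      using lin by (simp add: linear_sum linear_scale)
    also have "\<dots> = grad f x \<bullet> h"
      unfolding grad_def D_def[symmetric] by (simp add: inner_sum_right inner_commute mult.commute)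
    finally show ?thesis .
  qed
  then have "D = (\<lambda>h. grad f x \<bullet> h)" by auto
  with d show ?thesis by simp
qed


lemma cont_meas:
  fixes f :: "'a::euclidean_space \<Rightarrow> 'b::euclidean_space"
  shows "continuous_on UNIV f \<Longrightarrow> f \<in> borel_measurable lborel"
  by (simp add: borel_measurable_continuous_onI)

lemma powr_half: "(c::real) > 0 \<Longrightarrow> c powr (-1/2) = 1 / sqrt c"
  by (simp add: powr_minus_divide powr_half_sqrt)

lemma ennreal_top_mult: "(c::real) > 0 \<Longrightarrow> ennreal c * top = top"
  by simp

lemma C1_cont:
  fixes f :: "'a::euclidean_space \<Rightarrow> real"
  shows "C1_fun f \<Longrightarrow> continuous_on UNIV f"
  unfolding C1_fun_def
  by (meson continuous_at_imp_continuous_on differentiable_imp_continuous_within)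


theorem lemma2:
  fixes \<eta> \<eta>h :: "'a::euclidean_space \<Rightarrow> real" and C :: real
  assumes "pos_C1_density \<eta>" and "pos_C1_density \<eta>h"
    and "C > 0" and "poincare \<eta>h C"
  shows "ennreal (hellinger \<eta> \<eta>h) \<le> ennreal ((2 * C) powr (-1/2)) * fisher2 \<eta> \<eta>h"
proof -
  from assms(1) have pos1: "\<And>x. \<eta> x > 0" and C1a: "C1_fun \<eta>" and int1: "integrable lborel \<eta>"
    and one1: "(\<integral>x. \<eta> x \<partial>lborel) = 1"
    unfolding pos_C1_density_def by auto
  from assms(2) have pos2: "\<And>x. \<eta>h x > 0" and C1b: "C1_fun \<eta>h" and int2: "integrable lborel \<eta>h"
    and one2: "(\<integral>x. \<eta>h x \<partial>lborel) = 1"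
    unfolding pos_C1_density_def by auto
  from C1a have diff1: "\<And>x. \<eta> differentiable (at x)" and cg1: "continuous_on UNIV (grad \<eta>)"
    unfolding C1_fun_def by auto
  from C1b have diff2: "\<And>x. \<eta>h differentiable (at x)" and cg2: "continuous_on UNIV (grad \<eta>h)"
    unfolding C1_fun_def by auto
  have cont1: "continuous_on UNIV \<eta>" using C1_cont[OF C1a] .
  have cont2: "continuous_on UNIV \<eta>h" using C1_cont[OF C1b] .
  define L1 where "L1 = grad (\<lambda>y. ln (\<eta> y))"
  define L2 where "L2 = grad (\<lambda>y. ln (\<eta>h y))"
  have dln1: "((\<lambda>y. ln (\<eta> y)) has_derivative (\<lambda>h. ((1 / \<eta> x) *\<^sub>R grad \<eta> x) \<bullet> h)) (at x)" for x
  proof -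
    have "((\<lambda>y. ln (\<eta> y)) has_derivative (\<lambda>h. (grad \<eta> x \<bullet> h) * inverse (\<eta> x))) (at x)"
      by (rule has_derivative_ln[OF _ grad_works[OF diff1]]) (use pos1 in auto)
    then show ?thesis by (simp add: field_simps)
  qed
  have dln2: "((\<lambda>y. ln (\<eta>h y)) has_derivative (\<lambda>h. ((1 / \<eta>h x) *\<^sub>R grad \<eta>h x) \<bullet> h)) (at x)" for x
  proof -
    have "((\<lambda>y. ln (\<eta>h y)) has_derivative (\<lambda>h. (grad \<eta>h x \<bullet> h) * inverse (\<eta>h x))) (at x)"
      by (rule has_derivative_ln[OF _ grad_works[OF diff2]]) (use pos2 in auto)
    then show ?thesis by (simp add: field_simps)
  qed
  have L1eq: "L1 x = (1 / \<eta> x) *\<^sub>R grad \<eta> x" for x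
    unfolding L1_def by (rule grad_eq[OF dln1])
  have L2eq: "L2 x = (1 / \<eta>h x) *\<^sub>R grad \<eta>h x" for x
    unfolding L2_def by (rule grad_eq[OF dln2])
  have cL1: "continuous_on UNIV L1"
    unfolding L1eq[abs_def] using cont1 cg1 pos1
    by (intro continuous_intros) (auto simp: less_imp_neq[symmetric])
  have cL2: "continuous_on UNIV L2"
    unfolding L2eq[abs_def] using cont2 cg2 pos2
    by (intro continuous_intros) (auto simp: less_imp_neq[symmetric])
  define \<phi> where "\<phi> y = exp ((ln (\<eta> y) - ln (\<eta>h y)) / 2)" for y
  have \<phi>_eq: "\<phi> y = sqrt (\<eta> y) / sqrt (\<eta>h y)" for y
  proof -
    have "\<phi> y = exp (ln (\<eta> y) / 2) / exp (ln (\<eta>h y) / 2)"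
      unfolding \<phi>_def by (simp add: diff_divide_distrib exp_diff)
    also have "\<dots> = sqrt (\<eta> y) / sqrt (\<eta>h y)"
      using pos1[of y] pos2[of y]
      by (simp add: powr_half_sqrt[symmetric] powr_def)
    finally show ?thesis .
  qed
  have \<phi>pos: "\<phi> y > 0" for y unfolding \<phi>_def by simp
  have \<phi>sq: "(\<phi> y)\<^sup>2 * \<eta>h y = \<eta> y" for y
    using pos1[of y] pos2[of y] by (simp add: \<phi>_eq power_divide)
  have \<phi>1: "\<phi> y * \<eta>h y = sqrt (\<eta> y * \<eta>h y)" for y
  proof -
    have "\<phi> y * \<eta>h y = sqrt (\<eta> y) * (\<eta>h y / sqrt (\<eta>h y))" by (simp add: \<phi>_eq)
    also have "\<eta>h y / sqrt (\<eta>h y) = sqrt (\<eta>h y)"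
      using pos2[of y] by (metis real_div_sqrt less_imp_le)
    finally show ?thesis by (simp add: real_sqrt_mult)
  qed
  define G where "G x = (\<phi> x / 2) *\<^sub>R (L1 x - L2 x)" for x
  have d\<phi>: "(\<phi> has_derivative (\<lambda>h. G x \<bullet> h)) (at x)" for x
  proof -
    have "((\<lambda>y. ln (\<eta> y) - ln (\<eta>h y)) has_derivative (\<lambda>h. L1 x \<bullet> h - L2 x \<bullet> h)) (at x)"
      using dln1[of x] dln2[of x] unfolding L1eq[symmetric] L2eq[symmetric]
      by (rule has_derivative_diff)
    from has_derivative_mult_right[OF this, of "1/2"]
    have "((\<lambda>y. (ln (\<eta> y) - ln (\<eta>h y)) / 2) has_derivative (\<lambda>h. (L1 x \<bullet> h - L2 x \<bullet> h) / 2)) (at x)"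
      by simp
    from has_derivative_exp[OF this]
    have "(\<phi> has_derivative (\<lambda>h. (L1 x \<bullet> h - L2 x \<bullet> h) / 2 * \<phi> x)) (at x)"
      unfolding \<phi>_def[abs_def] by simp
    then show ?thesis
      by (rule has_derivative_eq_rhs) (auto simp: G_def inner_diff_left field_simps)
  qed
  have c\<phi>: "continuous_on UNIV \<phi>"
    unfolding \<phi>_def[abs_def] using cont1 cont2 pos1 pos2
    by (intro continuous_intros) (auto simp: less_imp_neq[symmetric])
  have cG: "continuous_on UNIV G"
    unfolding G_def[abs_def] using c\<phi> cL1 cL2 by (intro continuous_intros) auto
  define B where "B = (\<integral>x. sqrt (\<eta> x * \<eta>h x) \<partial>lborel)"
  define \<psi> where "\<psi> y = \<phi> y - B" for y
  have d\<psi>: "(\<psi> has_derivative (\<lambda>h. G x \<bullet> h)) (at x)" for x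
    unfolding \<psi>_def[abs_def] using d\<phi>[of x] by (auto intro: derivative_eq_intros)
  have grad\<psi>: "grad \<psi> = G" using grad_eq[OF d\<psi>] by auto
  have C1\<psi>: "C1_fun \<psi>"
    unfolding C1_fun_def grad\<psi> using d\<psi> cG by (auto simp: differentiable_def)
  have meas1: "\<eta> \<in> borel_measurable lborel" by (rule cont_meas[OF cont1])
  have meas2: "\<eta>h \<in> borel_measurable lborel" by (rule cont_meas[OF cont2])
  have intS: "integrable lborel (\<lambda>x. sqrt (\<eta> x * \<eta>h x))"
  proof (rule Bochner_Integration.integrable_bound[OF Bochner_Integration.integrable_add[OF int1 int2]])
    show "(\<lambda>x. sqrt (\<eta> x * \<eta>h x)) \<in> borel_measurable lborel" using meas1 meas2 by measurable
    show "AE x in lborel. norm (sqrt (\<eta> x * \<eta>h x)) \<le> norm (\<eta> x + \<eta>h x)"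
    proof
      fix x
      have "sqrt (\<eta> x * \<eta>h x) \<le> (\<eta> x + \<eta>h x) / 2"
        using pos1[of x] pos2[of x] by (intro arith_geo_mean_sqrt) auto
      then show "norm (sqrt (\<eta> x * \<eta>h x)) \<le> norm (\<eta> x + \<eta>h x)"
        using pos1[of x] pos2[of x] by auto
    qed
  qed
  have B0: "B \<ge> 0" unfolding B_def by (intro integral_nonneg_AE AE_I2) (simp add: pos1 pos2 less_imp_le)
  have hel_int: "(\<integral>x. (sqrt (\<eta> x) - sqrt (\<eta>h x))\<^sup>2 \<partial>lborel) = 2 - 2 * B"
  proof -
    have "(sqrt (\<eta> x) - sqrt (\<eta>h x))\<^sup>2 = \<eta> x + \<eta>h x - 2 * sqrt (\<eta> x * \<eta>h x)" for x
      using pos1[of x] pos2[of x] by (simp add: power2_diff real_sqrt_mult)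
    then have "(\<integral>x. (sqrt (\<eta> x) - sqrt (\<eta>h x))\<^sup>2 \<partial>lborel)
        = (\<integral>x. \<eta> x + \<eta>h x - 2 * sqrt (\<eta> x * \<eta>h x) \<partial>lborel)" by simp
    also have "\<dots> = 2 - 2 * B"
      using int1 int2 intS one1 one2 unfolding B_def by simp
    finally show ?thesis .
  qed
  have hel: "hellinger \<eta> \<eta>h = sqrt (2 - 2 * B)"
    unfolding hellinger_def hel_int ..
  have B1: "B \<le> 1"
  proof -
    have "0 \<le> (\<integral>x. (sqrt (\<eta> x) - sqrt (\<eta>h x))\<^sup>2 \<partial>lborel)" by (intro integral_nonneg_AE) auto
    then show ?thesis using hel_int by simp
  qed
  define d where "d x = (norm (L1 x - L2 x))\<^sup>2 * \<eta> x" for x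
  have cd: "continuous_on UNIV d" unfolding d_def[abs_def]
    using cL1 cL2 cont1 by (intro continuous_intros)
  have measd: "d \<in> borel_measurable lborel" by (rule cont_meas[OF cd])
  have d0: "d x \<ge> 0" for x unfolding d_def using pos1[of x] by simp
  have fish: "fisher2 \<eta> \<eta>h = ennsqrt (\<integral>\<^sup>+x. ennreal (d x) \<partial>lborel)"
    unfolding fisher2_def d_def L1_def L2_def ..
  have c0: "(2 * C) powr (-1/2) > 0" using assms(3) by simp
  show ?thesis
  proof (cases "(\<integral>\<^sup>+x. ennreal (d x) \<partial>lborel)" rule: ennreal_cases)
    case top
    then have "fisher2 \<eta> \<eta>h = top" unfolding fish ennsqrt_def by simp
    then show ?thesis using ennreal_top_mult[OF c0] by simp
  next
    case (real r)
    have I_r: "(\<integral>\<^sup>+x. ennreal (d x) \<partial>lborel) = ennreal r" using real by simp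
    have intd: "integrable lborel d"
      by (rule integrableI_nn_integral_finite[OF measd _ I_r]) (use d0 in auto)
    have "(\<integral>\<^sup>+x. ennreal (d x) \<partial>lborel) = ennreal (\<integral>x. d x \<partial>lborel)"
      by (rule nn_integral_eq_integral[OF intd]) (use d0 in auto)
    then have rJ: "r = (\<integral>x. d x \<partial>lborel)"
      using real d0 by (metis ennreal_inj integral_nonneg_AE AE_I2)
    have fishr: "fisher2 \<eta> \<eta>h = ennreal (sqrt r)"
      unfolding fish ennsqrt_def using real by simp
    have gradsq: "(norm (grad \<psi> x))\<^sup>2 * \<eta>h x = d x / 4" for x
    proof -
      have "(norm (grad \<psi> x))\<^sup>2 * \<eta>h x = ((\<phi> x)\<^sup>2 * \<eta>h x) * (norm (L1 x - L2 x))\<^sup>2 / 4"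
        unfolding grad\<psi> G_def by (simp add: power_mult_distrib power_divide)
      then show ?thesis unfolding \<phi>sq d_def by simp
    qed
    have P: "(\<integral>x. (\<psi> x)\<^sup>2 * \<eta>h x \<partial>lborel) \<le> inverse C * (\<integral>x. (norm (grad \<psi> x))\<^sup>2 * \<eta>h x \<partial>lborel)"
    proof -
      have e1: "\<psi> x * \<eta>h x = sqrt (\<eta> x * \<eta>h x) - B * \<eta>h x" for x
        unfolding \<psi>_def by (simp add: algebra_simps \<phi>1[symmetric])
      have e2: "(\<psi> x)\<^sup>2 * \<eta>h x = \<eta> x - 2 * B * sqrt (\<eta> x * \<eta>h x) + B\<^sup>2 * \<eta>h x" for x
      proof -
        have "(\<psi> x)\<^sup>2 * \<eta>h x = (\<phi> x)\<^sup>2 * \<eta>h x - 2 * B * (\<phi> x * \<eta>h x) + B\<^sup>2 * \<eta>h x"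
          unfolding \<psi>_def by (simp add: power2_diff algebra_simps)
        then show ?thesis unfolding \<phi>sq \<phi>1 .
      qed
      show ?thesis
        using assms(4) unfolding poincare_def
        apply (elim allE[of _ \<psi>])
        apply (erule impE)
        using C1\<psi> int1 int2 intS intd unfolding e1 e2 gradsq
        by (auto simp: B_def one2)
    qed
    have lhs: "(\<integral>x. (\<psi> x)\<^sup>2 * \<eta>h x \<partial>lborel) = 1 - B\<^sup>2"
    proof -
      have e2: "(\<psi> x)\<^sup>2 * \<eta>h x = \<eta> x - 2 * B * sqrt (\<eta> x * \<eta>h x) + B\<^sup>2 * \<eta>h x" for x
      proof -
        have "(\<psi> x)\<^sup>2 * \<eta>h x = (\<phi> x)\<^sup>2 * \<eta>h x - 2 * B * (\<phi> x * \<eta>h x) + B\<^sup>2 * \<eta>h x"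
          unfolding \<psi>_def by (simp add: power2_diff algebra_simps)
        then show ?thesis unfolding \<phi>sq \<phi>1 .
      qed
      show ?thesis unfolding e2 using int1 int2 intS one1 one2
        by (simp add: B_def[symmetric] power2_eq_square)
    qed
    have rhs: "(\<integral>x. (norm (grad \<psi> x))\<^sup>2 * \<eta>h x \<partial>lborel) = r / 4"
      unfolding gradsq rJ by simp
    have key: "1 - B\<^sup>2 \<le> r / (4 * C)"
    proof -
      have "1 - B\<^sup>2 \<le> inverse C * (r / 4)" using P unfolding lhs rhs .
      then show ?thesis using assms(3) by (simp add: field_simps)
    qed
    have "2 - 2 * B \<le> 2 * (1 - B\<^sup>2)"
      using B0 B1 by (simp add: power2_eq_square algebra_simps mult_right_le_one_le)
    also have "\<dots> \<le> r / (2 * C)" using key by (simp add: field_simps)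
    finally have h2: "2 - 2 * B \<le> r / (2 * C)" .
    have "hellinger \<eta> \<eta>h \<le> sqrt (r / (2 * C))" unfolding hel using h2 by simp
    also have "\<dots> = (2 * C) powr (-1/2) * sqrt r"
    proof -
      have "(2 * C) powr (-1/2) = 1 / sqrt (2 * C)" by (rule powr_half) (use assms(3) in simp)
      then show ?thesis by (simp add: real_sqrt_divide)
    qed
    finally have "hellinger \<eta> \<eta>h \<le> (2 * C) powr (-1/2) * sqrt r" .
    then have "ennreal (hellinger \<eta> \<eta>h) \<le> ennreal ((2 * C) powr (-1/2) * sqrt r)"
      by (rule ennreal_leI)
    also have "\<dots> = ennreal ((2 * C) powr (-1/2)) * ennreal (sqrt r)"
      by (rule ennreal_mult) (use c0 real in auto)
    finally show ?thesis unfolding fishr .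
  qed
qed

end
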